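(* Let $k\ge2$ and $n\le0$, and write $q=q_{n,k}$, $r=r_{n,k}$. Set $$d_{n,k}=\begin{cases}|n|+1-k,& r=0,\\ |n|+1-kr,& 1\le r\le k-1.\end{cases}$$ Then $\mathcal{F}_{n,k}\equiv0$ if and only if $d_{n,k}<0$. If $d_{n,k}\ge0$, then $\mathcal{F}_{n,k}(x)$ has degree exactly $d_{n,k}$, and its leading term is $x^{|n|+1-k}$ when $r=0$, and $(-1)^r\binom{q-1}{r-1}x^{|n|+1-kr}$ when $1\le r\le k-1$. In particular, for $k\ge3$ the degree of the nonvanishing polynomials $\mathcal{F}_{n,k}$, $n<0$, is not a monotonically nondecreasing function of $|n|$.
   Context: For $k\ge2$, the polynomials $\mathcal{F}_{n,k}(x)\in\mathbb{Z}[x]$ ($n\in\mathbb{Z}$) are defined by $\mathcal{F}_{1,k}=1$, $\mathcal{F}_{n,k}=0$ for $n=0,-1,\dots,-(k-2)$, and $\mathcal{F}_{n,k}(x)=\sum_{j=1}^{k}x^{k-j}\mathcal{F}_{n-j,k}(x)$ for all $n\in\mathbb{Z}$. This recurrence is used upwards for $n\ge2$, and downwards for $n\le-(k-1)$ as $\mathcal{F}_{n,k}=\mathcal{F}_{n+k,k}-\sum_{j=1}^{k-1}x^j\mathcal{F}_{n+j,k}$. For $n\le0$, set $q_{n,k}=\lfloor(|n|+1)/k\rfloor$ and let $r_{n,k}\in\{0,\dots,k-1\}$ be the residue of $|n|+1$ modulo $k$. Then $|n|+1=kq_{n,k}+r_{n,k}$. *)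

theory Defs
  imports "HOL-Computational_Algebra.Polynomial"
begin

text \<open>Values F_{n,k} for n = 1 - m (m :: nat), i.e. n \<le> 1, computed by the downward
  recursion F_{n} = F_{n+k} - sum_{j=1}^{k-1} x^j F_{n+j}, with F_1 = 1 and
  F_0 = ... = F_{-(k-2)} = 0.  (The case k = 0 is irrelevant and set to 0.)\<close>
fun Fdown :: "nat \<Rightarrow> nat \<Rightarrow> int poly" where
  "Fdown k m =
     (if k = 0 then 0
      else if m = 0 then 1
      else if m < k then 0
      else Fdown k (m - k) - sum_list (map (\<lambda>j. monom 1 j * Fdown k (m - j)) [1..<k]))"

function F :: "nat \<Rightarrow> int \<Rightarrow> int poly" where
  "F k n =
     (if n \<le> 1 then Fdown k (nat (1 - n))
      else sum_list (map (\<lambda>j. monom 1 (k - j) * F k (n - int j)) [1..<k+1]))"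
  by pat_completeness auto
termination
  by (relation "measure (\<lambda>(k, n). nat n)") auto

end

theory Submission
  imports Defs
begin

declare Fdown.simps[simp del]

lemma Fdown_lt: "0 < k \<Longrightarrow> 0 < m \<Longrightarrow> m < k \<Longrightarrow> Fdown k m = 0"
  by (subst Fdown.simps) simp

lemma Fdown_0: "0 < k \<Longrightarrow> Fdown k 0 = 1"
  by (subst Fdown.simps) simp

lemma Fdown_S:
  assumes "0 < k" "k \<le> m"
  shows "Fdown k (m - k) = (\<Sum>j<k. monom 1 j * Fdown k (m - j))"
proof -
  let ?f = "\<lambda>j. monom 1 j * Fdown k (m - j)"
  have "Fdown k m = Fdown k (m - k) - sum_list (map ?f [1..<k])"
    using assms by (subst Fdown.simps) simp
  also have "sum_list (map ?f [1..<k]) = sum ?f {1..<k}"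
    by (simp add: sum_set_upt_conv_sum_list_nat[symmetric])
  finally have 1: "Fdown k (m - k) = Fdown k m + sum ?f {1..<k}" by simp
  have "(\<Sum>j<k. ?f j) = sum ?f {0..<k}" by (simp add: lessThan_atLeast0)
  also have "\<dots> = ?f 0 + sum ?f {Suc 0..<k}" using assms by (subst sum.atLeast_Suc_lessThan) auto
  finally show ?thesis using 1 by simp
qed

lemma Fdown_rec:
  assumes "0 < k"
  shows "Fdown k (Suc a + k) = (1 + monom 1 k) * Fdown k (Suc a) - monom 1 1 * Fdown k a"
proof -
  let ?m = "Suc a + k"
  let ?f = "\<lambda>j. monom 1 j * Fdown k (?m - j)"
  have A: "Fdown k (Suc a) = (\<Sum>j<k. ?f j)" using Fdown_S[OF assms, of ?m] by simp
  have B: "Fdown k a = (\<Sum>j<k. monom 1 j * Fdown k (?m - Suc j))" using Fdown_S[OF assms, of "a + k"] by simp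
  have "monom 1 1 * Fdown k a = (\<Sum>j<k. ?f (Suc j))"
    unfolding B by (simp add: sum_distrib_left mult.assoc[symmetric] mult_monom)
  hence "Fdown k (Suc a) - monom 1 1 * Fdown k a = (\<Sum>j<k. ?f j - ?f (Suc j))"
    using A by (simp add: sum_subtractf)
  also have "\<dots> = ?f 0 - ?f k" by (rule sum_lessThan_telescope')
  finally show ?thesis by (simp add: algebra_simps)
qed

lemma coeff_rec:
  assumes "0 < k"
  shows "coeff (Fdown k (Suc a + k)) i = coeff (Fdown k (Suc a)) i
     + (if k \<le> i then coeff (Fdown k (Suc a)) (i - k) else 0)
     - (if 1 \<le> i then coeff (Fdown k a) (i - 1) else 0)"
  unfolding Fdown_rec[OF assms] by (simp add: distrib_right coeff_monom_mult)


lemma Fdown_k: "0 < k \<Longrightarrow> Fdown k k = 1"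
proof -
  assume k: "0 < k"
  have "Fdown k (k - k) = (\<Sum>j<k. monom 1 j * Fdown k (k - j))" by (rule Fdown_S[OF k]) simp
  also have "\<dots> = (\<Sum>j\<in>{0}. monom 1 j * Fdown k (k - j))"
    by (rule sum.mono_neutral_right) (use k in \<open>auto simp: Fdown_lt\<close>)
  finally show ?thesis using k by (simp add: Fdown_0)
qed

definition sv :: "nat \<Rightarrow> nat" where "sv r = (if r = 0 then 1 else r)"
definition cv :: "nat \<Rightarrow> nat \<Rightarrow> int" where
  "cv q r = (if r = 0 then 1 else (-1) ^ r * int ((q - 1) choose (r - 1)))"

lemma inv:
  assumes k: "2 \<le> k"
  shows "r < k \<Longrightarrow> 1 \<le> k*q + r \<Longrightarrow> k*q + r \<le> i + k * sv r \<Longrightarrow>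
    coeff (Fdown k (k*q+r)) i = (if i + k * sv r = k*q + r then cv q r else 0)"
proof (induction q arbitrary: r i rule: less_induct)
  case (less q)
  have k0: "0 < k" using k by simp
  show ?case
  proof (cases q)
    case 0
    then have r1: "1 \<le> r" using less.prems by simp
    have "2 * r \<le> k * r" using k by (rule mult_le_mono1)
    then have "i + k * r \<noteq> r" using r1 by linarith
    then show ?thesis using 0 r1 less.prems by (simp add: Fdown_lt k0 sv_def)
  next
    case (Suc p)
    note IH = less.IH[of p]
    show ?thesis
    proof (cases "r = 0")
      case r0: True
      show ?thesis
      proof (cases p)
        case 0
        then show ?thesis using Suc r0 k0 by (simp add: Fdown_k sv_def cv_def)
      next
        case (Suc p')
        have IH1: "\<And>i'. k * Suc p' \<le> i' + k \<Longrightarrow> coeff (Fdown k (k * Suc p')) i' = (if i' + k = k * Suc p' then 1 else 0)"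
          using IH[of 0] Suc \<open>q = Suc p\<close> k0 by (simp add: sv_def cv_def)
        have IH2: "\<And>i'. k * p' + (k - 1) \<le> i' + k * (k - 1) \<Longrightarrow> coeff (Fdown k (k * p' + (k - 1))) i' = (if i' + k * (k - 1) = k * p' + (k - 1) then cv p' (k - 1) else 0)"
          using less.IH[of p' "k - 1"] Suc \<open>q = Suc p\<close> k by (simp add: sv_def)
        have m: "k * q + r = k * Suc p' + k" using Suc \<open>q = Suc p\<close> r0 k0 by simp
        have a1: "Suc (k * p' + (k - 1)) = k * Suc p'" using k0 by simp
        have ige: "k * Suc p' \<le> i" using less.prems Suc \<open>q = Suc p\<close> r0 by (simp add: sv_def)
        have kk: "2 \<le> k * (k - 1)" using mult_le_mono[of 2 k 1 "k - 1"] k by simp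
        have "coeff (Fdown k (k*q+r)) i = coeff (Fdown k (k * Suc p')) i
           + (if k \<le> i then coeff (Fdown k (k * Suc p')) (i - k) else 0)
           - (if 1 \<le> i then coeff (Fdown k (k * p' + (k - 1))) (i - 1) else 0)"
          using coeff_rec[OF k0, of "k * p' + (k - 1)" i] unfolding a1 m .
        also have "coeff (Fdown k (k * Suc p')) i = 0" using IH1[of i] ige k0 by simp
        also have "(if k \<le> i then coeff (Fdown k (k * Suc p')) (i - k) else 0) = (if i = k * Suc p' then 1 else 0)"
        proof -
          have "k \<le> i" using ige by (metis le_add1 mult_Suc_right order_trans)
          then show ?thesis using IH1[of "i - k"] ige by simp
        qed
        also have "(if 1 \<le> i then coeff (Fdown k (k * p' + (k - 1))) (i - 1) else 0) = 0"
        proof -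
          have "k \<le> i" using ige by (metis le_add1 mult_Suc_right order_trans)
          then have "1 \<le> i" using k by simp
          moreover have "k * p' + (k - 1) \<le> i - 1 + k * (k - 1)" using ige kk k by simp
          moreover have "i - 1 + k * (k - 1) \<noteq> k * p' + (k - 1)" using ige kk k by simp
          ultimately show ?thesis using IH2[of "i - 1"] by simp
        qed
        finally show ?thesis using r0 Suc \<open>q = Suc p\<close> by (simp add: sv_def cv_def)
      qed
    next
      case rn0: False
      show ?thesis
      proof (cases "r = 1")
        case r1: True
        show ?thesis
        proof (cases p)
          case 0
          have m: "k * q + r = Suc 0 + k" using 0 Suc r1 by simp
          have G1: "Fdown k (Suc 0) = 0" using k by (simp add: Fdown_lt)
          have ige: "1 \<le> i" using less.prems Suc r1 0 by (simp add: sv_def)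
          have "coeff (Fdown k (k*q+r)) i = - coeff (1::int poly) (i - 1)"
            using coeff_rec[OF k0, of 0 i] ige unfolding m by (simp add: G1 Fdown_0 k0)
          then show ?thesis using ige 0 Suc r1 by (cases "i = 1") (auto simp: sv_def cv_def)
        next
          case (Suc p')
          have IHa: "\<And>i'. k * p + 1 \<le> i' + k \<Longrightarrow> coeff (Fdown k (k * p + 1)) i' = (if i' + k = k * p + 1 then -1 else 0)"
            using IH[of 1] Suc \<open>q = Suc p\<close> k by (simp add: sv_def cv_def)
          have kp: "1 \<le> k * p" using Suc k0 by simp
          have IHb: "\<And>i'. k * p \<le> i' + k \<Longrightarrow> coeff (Fdown k (k * p)) i' = (if i' + k = k * p then 1 else 0)"
            using IH[of 0] Suc \<open>q = Suc p\<close> k kp by (simp add: sv_def cv_def)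
          have m: "k * q + r = Suc (k * p) + k" using \<open>q = Suc p\<close> r1 by simp
          have ige: "k * p + 1 \<le> i" using less.prems \<open>q = Suc p\<close> r1 by (simp add: sv_def)
          have kp2: "k \<le> k * p" using Suc by simp
          have "coeff (Fdown k (k*q+r)) i = coeff (Fdown k (k * p + 1)) i
             + (if k \<le> i then coeff (Fdown k (k * p + 1)) (i - k) else 0)
             - (if 1 \<le> i then coeff (Fdown k (k * p)) (i - 1) else 0)"
            using coeff_rec[OF k0, of "k * p" i] unfolding m by simp
          also have "coeff (Fdown k (k * p + 1)) i = 0" using IHa[of i] ige k0 by simp
          also have "(if k \<le> i then coeff (Fdown k (k * p + 1)) (i - k) else 0) = (if i = k * p + 1 then -1 else 0)"
          proof -
            have "k \<le> i" using ige kp2 by linarith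
            then show ?thesis using IHa[of "i - k"] ige by simp
          qed
          also have "(if 1 \<le> i then coeff (Fdown k (k * p)) (i - 1) else 0) = 0"
            using IHb[of "i - 1"] ige kp2 k0 by simp
          finally show ?thesis using r1 \<open>q = Suc p\<close> by (simp add: sv_def cv_def)
        qed
      next
        case False
        then obtain r' where r': "r = Suc (Suc r')" using rn0 by (metis One_nat_def not0_implies_Suc)
        have rk: "r < k" using less.prems by simp
        have IHa: "\<And>i'. k * p + r \<le> i' + k * r \<Longrightarrow> coeff (Fdown k (k * p + r)) i' = (if i' + k * r = k * p + r then cv p r else 0)"
          using IH[of r] \<open>q = Suc p\<close> rk r' by (simp add: sv_def)
        have IHb: "\<And>i'. k * p + Suc r' \<le> i' + k * Suc r' \<Longrightarrow> coeff (Fdown k (k * p + Suc r')) i' = (if i' + k * Suc r' = k * p + Suc r' then cv p (Suc r') else 0)"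
          using IH[of "Suc r'"] \<open>q = Suc p\<close> rk r' by (simp add: sv_def)
        have kr: "k * r = k * Suc r' + k" using r' by simp
        have m: "k * q + r = Suc (k * p + Suc r') + k" using \<open>q = Suc p\<close> r' by simp
        have m2: "Suc (k * p + Suc r') = k * p + r" using r' by simp
        have prem: "k * p + r \<le> i + k * Suc r'" using less.prems \<open>q = Suc p\<close> kr r' by (simp add: sv_def)
        have "coeff (Fdown k (k*q+r)) i = coeff (Fdown k (k * p + r)) i
           + (if k \<le> i then coeff (Fdown k (k * p + r)) (i - k) else 0)
           - (if 1 \<le> i then coeff (Fdown k (k * p + Suc r')) (i - 1) else 0)"
          using coeff_rec[OF k0, of "k * p + Suc r'" i] unfolding m2 m .
        also have "coeff (Fdown k (k * p + r)) i = 0" using IHa[of i] prem kr k0 by simp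
        also have "(if k \<le> i then coeff (Fdown k (k * p + r)) (i - k) else 0)
             = (if k \<le> i \<and> i + k * Suc r' = k * p + r then cv p r else 0)"
        proof (cases "k \<le> i")
          case True
          then show ?thesis using IHa[of "i - k"] prem kr by simp
        qed simp
        also have "(if 1 \<le> i then coeff (Fdown k (k * p + Suc r')) (i - 1) else 0)
             = (if 1 \<le> i \<and> i + k * Suc r' = k * p + r then cv p (Suc r') else 0)"
        proof (cases "1 \<le> i")
          case True
          then show ?thesis using IHb[of "i - 1"] prem r' by auto
        qed simp
        finally have coeq: "coeff (Fdown k (k*q+r)) i = (if k \<le> i \<and> i + k * Suc r' = k * p + r then cv p r else 0)
          - (if 1 \<le> i \<and> i + k * Suc r' = k * p + r then cv p (Suc r') else 0)" by simp
        have goaleq: "(i + k * sv r = k * q + r) = (i + k * Suc r' = k * p + r)"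
          using kr \<open>q = Suc p\<close> r' by (simp add: sv_def)
        show ?thesis
        proof (cases "i + k * Suc r' = k * p + r")
          case False
          then show ?thesis using coeq goaleq by simp
        next
          case E: True
          have pge: "Suc r' \<le> p"
          proof (rule ccontr)
            assume "\<not> Suc r' \<le> p"
            then have kp: "k * p \<le> k * r'" by simp
            have "k * Suc r' = k + k * r'" by simp
            then show False using kp E rk r' by linarith
          qed
          then obtain p'' where p'': "p = Suc p''" by (cases p) auto
          have "k * Suc r' \<le> k * p" using pge by (rule mult_le_mono2)
          then have i1: "1 \<le> i" using E r' by simp
          have sgn: "((-1::int) ^ r) = (-1) ^ r'" using r' by simp
          show ?thesis
          proof (cases "k \<le> i")
            case True
            then show ?thesis using coeq goaleq E i1 r' p'' \<open>q = Suc p\<close>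
              by (simp add: cv_def algebra_simps)
          next
            case False
            have "p'' = r'"
            proof (rule ccontr)
              assume "p'' \<noteq> r'"
              then have "k * r \<le> k * p" using pge p'' r' by (intro mult_le_mono2) simp
              then show False using E kr False by simp
            qed
            then show ?thesis using coeq goaleq E i1 r' p'' \<open>q = Suc p\<close> False
              by (simp add: cv_def)
          qed
        qed
      qed
    qed
  qed
qed

lemma fin:
  assumes k: "2 \<le> k" and rk: "r < k" and N1: "1 \<le> k*q + r"
  shows "(Fdown k (k*q+r) = 0 \<longleftrightarrow> k*q + r < k * sv r) \<and>
         (k * sv r \<le> k*q + r \<longrightarrow> degree (Fdown k (k*q+r)) = k*q + r - k * sv r
             \<and> lead_coeff (Fdown k (k*q+r)) = cv q r)"
proof (cases "k*q + r < k * sv r")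
  case True
  have "\<forall>i. coeff (Fdown k (k*q+r)) i = 0"
    using inv[OF k rk N1] True by simp
  then have "Fdown k (k*q+r) = 0" by (simp add: poly_eq_iff)
  then show ?thesis using True by simp
next
  case False
  let ?i0 = "k*q + r - k * sv r"
  have c0: "coeff (Fdown k (k*q+r)) ?i0 = cv q r" using inv[OF k rk N1, of ?i0] False by simp
  have hi: "\<forall>i>?i0. coeff (Fdown k (k*q+r)) i = 0"
  proof (intro allI impI)
    fix i assume "?i0 < i"
    then have "k*q + r \<le> i + k * sv r" "i + k * sv r \<noteq> k*q + r" using False by auto
    then show "coeff (Fdown k (k*q+r)) i = 0" using inv[OF k rk N1, of i] by simp
  qed
  have cnz: "cv q r \<noteq> 0"
  proof (cases "r = 0")
    case False
    have "r \<le> q"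
    proof (rule ccontr)
      assume "\<not> r \<le> q"
      then have "k * Suc q \<le> k * r" by (intro mult_le_mono2) simp
      then show False using \<open>\<not> k*q + r < k * sv r\<close> False rk by (simp add: sv_def)
    qed
    then show ?thesis using False by (simp add: cv_def)
  qed (simp add: cv_def)
  have "degree (Fdown k (k*q+r)) \<le> ?i0" using hi by (intro degree_le) auto
  moreover have "?i0 \<le> degree (Fdown k (k*q+r))" using c0 cnz by (intro le_degree) simp
  ultimately have d: "degree (Fdown k (k*q+r)) = ?i0" by simp
  then show ?thesis using c0 cnz False by auto
qed


lemma F_nonpos: "n \<le> 0 \<Longrightarrow> F k n = Fdown k (nat (\<bar>n\<bar> + 1))"
  by (subst F.simps) simp

theorem mainTheorem10:
  fixes k :: nat
  assumes "k \<ge> 2"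
  shows "(\<forall>n::int. n \<le> 0 \<longrightarrow>
           (let N = nat (\<bar>n\<bar> + 1); q = N div k; r = N mod k;
                d = (if r = 0 then int N - int k else int N - int k * int r)
            in (F k n = 0 \<longleftrightarrow> d < 0) \<and>
               (d \<ge> 0 \<longrightarrow>
                  degree (F k n) = nat d \<and>
                  lead_coeff (F k n) =
                    (if r = 0 then 1 else (-1) ^ r * int ((q - 1) choose (r - 1))))))
         \<and> (k \<ge> 3 \<longrightarrow>
              \<not> (\<forall>n m :: int. n < 0 \<longrightarrow> m < 0 \<longrightarrow> F k n \<noteq> 0 \<longrightarrow> F k m \<noteq> 0 \<longrightarrow>
                   \<bar>n\<bar> \<le> \<bar>m\<bar> \<longrightarrow> degree (F k n) \<le> degree (F k m)))"
proof (intro conjI allI impI)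
  fix n :: int assume n0: "n \<le> 0"
  define N where "N = nat (\<bar>n\<bar> + 1)"
  define q where "q = N div k"
  define r where "r = N mod k"
  have k0: "0 < k" using assms by simp
  have Nqr: "N = k * q + r" unfolding q_def r_def by simp
  have rk: "r < k" unfolding r_def using k0 by simp
  have N1: "1 \<le> k * q + r" using Nqr N_def by simp
  have FN: "F k n = Fdown k (k * q + r)" using F_nonpos[OF n0] Nqr N_def by simp
  have dd: "(if r = 0 then int N - int k else int N - int k * int r) = int N - int (k * sv r)"
    by (simp add: sv_def)
  have cvv: "cv q r = (if r = 0 then 1 else (-1) ^ r * int ((q - 1) choose (r - 1)))"
    by (simp add: cv_def)
  have l1: "(int N - int (k * sv r) < 0) = (N < k * sv r)" by linarith
  have l2: "(0 \<le> int N - int (k * sv r)) = (k * sv r \<le> N)" by linarith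
  have l3: "nat (int N - int (k * sv r)) = N - k * sv r" by linarith
  note fin[OF assms rk N1]
  then show "let N = nat (\<bar>n\<bar> + 1); q = N div k; r = N mod k;
                d = (if r = 0 then int N - int k else int N - int k * int r)
            in (F k n = 0 \<longleftrightarrow> d < 0) \<and>
               (d \<ge> 0 \<longrightarrow>
                  degree (F k n) = nat d \<and>
                  lead_coeff (F k n) =
                    (if r = 0 then 1 else (-1) ^ r * int ((q - 1) choose (r - 1))))"
    unfolding Let_def N_def[symmetric] q_def[symmetric] r_def[symmetric] dd cvv[symmetric] FN l1 l2 l3
    unfolding Nqr by blast
next
  assume k3: "3 \<le> k"
  have k2: "2 \<le> k" using k3 by simp
  have f1: "Fdown k (k*2+1) \<noteq> 0 \<and> degree (Fdown k (k*2+1)) = k + 1"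
    using fin[OF k2, of 1 2] k3 by (simp add: sv_def)
  have f2: "Fdown k (k*2+2) \<noteq> 0 \<and> degree (Fdown k (k*2+2)) = 2"
    using fin[OF k2, of 2 2] k3 by (simp add: sv_def)
  have e1: "F k (- (2 * int k)) = Fdown k (k*2+1)"
    by (subst F_nonpos) (auto simp: nat_add_distrib nat_mult_distrib mult.commute)
  have e2: "F k (- (2 * int k + 1)) = Fdown k (k*2+2)"
    by (subst F_nonpos) (auto simp: nat_add_distrib nat_mult_distrib mult.commute)
  show "\<not> (\<forall>n m :: int. n < 0 \<longrightarrow> m < 0 \<longrightarrow> F k n \<noteq> 0 \<longrightarrow> F k m \<noteq> 0 \<longrightarrow>
                   \<bar>n\<bar> \<le> \<bar>m\<bar> \<longrightarrow> degree (F k n) \<le> degree (F k m))"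
  proof
    assume H: "\<forall>n m :: int. n < 0 \<longrightarrow> m < 0 \<longrightarrow> F k n \<noteq> 0 \<longrightarrow> F k m \<noteq> 0 \<longrightarrow>
                   \<bar>n\<bar> \<le> \<bar>m\<bar> \<longrightarrow> degree (F k n) \<le> degree (F k m)"
    have "degree (F k (- (2 * int k))) \<le> degree (F k (- (2 * int k + 1)))"
      using H[rule_format, of "- (2 * int k)" "- (2 * int k + 1)"] e1 e2 f1 f2 k3 by simp
    then show False using e1 e2 f1 f2 k3 by simp
  qed
qed

end
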